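(* Consider the MPG algorithm described in the context, and suppose that Assumption (A1) holds and that for each $j=1,\ldots,m$ the gradient $\nabla G_j$ is Lipschitz continuous with constant $L_j>0$. Then, for a given tolerance $\varepsilon>0$, the MPG algorithm generates a point $x^k$ such that $|\theta_\alpha(x^k)|\le\varepsilon$ in at most $\mathcal{O}(1/\varepsilon)$ iterations (that is, there is a constant $C>0$, independent of $\varepsilon$, such that some iterate $x^k$ with $k\le C/\varepsilon$ satisfies $|\theta_\alpha(x^k)|\le\varepsilon$).
   Context: Let $F:\mathbb{R}^n\to(\mathbb{R}\cup\{+\infty\})^m$, $F=(F_1,\ldots,F_m)$, with $F_j=G_j+H_j$ for $j=1,\ldots,m$, where: (i) each $G_j:\mathbb{R}^n\to\mathbb{R}$ is continuously differentiable and convex; (ii) each $H_j:\mathbb{R}^n\to\mathbb{R}\cup\{+\infty\}$ is proper, convex and continuous on its domain; (iii) $\mathrm{dom}(F):=\{x: F_j(x)<+\infty\ \forall j\}$ is nonempty and closed. For $u,v\in\mathbb{R}^m$, $u\preceq v$ means $u_j\le v_j$ for all $j$. Assumption (A1): for every sequence $\{y^k\}\subset\mathrm{dom}(F)$ with $F(y^{k+1})\preceq F(y^k)$ for all $k$, there exists $y\in\mathrm{dom}(F)$ with $F(y)\preceq F(y^k)$ for all $k$. For $x\in\mathrm{dom}(F)$ and $\alpha>0$ define $\psi_x(u):=\max_{j=1,\ldots,m}\big(\nabla G_j(x)^\top(u-x)+H_j(u)-H_j(x)\big)$, $p_\alpha(x):=\arg\min_{u\in\mathbb{R}^n}\psi_x(u)+\frac{1}{2\alpha}\|u-x\|^2$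 (unique minimizer), and $\theta_\alpha(x):=\psi_x(p_\alpha(x))+\frac{1}{2\alpha}\|p_\alpha(x)-x\|^2$ (one has $\theta_\alpha\le 0$, with equality exactly at weakly Pareto optimal points). MPG algorithm. Step 0: choose $x^0\in\mathrm{dom}(F)$, $\alpha>0$, $\gamma\in(0,2/\alpha)$, $0<\tau_1<\tau_2<1$; set $k=0$. Step 1: compute $p^k:=p_\alpha(x^k)$ and $\theta_\alpha(x^k)$. Step 2: if $\theta_\alpha(x^k)=0$, stop. Step 3: set $d^k:=p^k-x^k$, take $j_k^*\in\arg\max_{j}\nabla G_j(x^k)^\top d^k$, set $t=1$. Step 3.1: if $G_{j_k^*}(x^k+td^k)\le G_{j_k^*}(x^k)+t\nabla G_{j_k^*}(x^k)^\top d^k+t\frac{\gamma}{2}\|d^k\|^2$, go to Step 3.2; otherwise replace $t$ by some value in $[\tau_1 t,\tau_2 t]$ and repeat Step 3.1. Step 3.2: if $F(x^k+td^k)\preceq F(x^k)$, set $t_k=t$ and go to Step 4. Step 3.3: replace $t$ by some value in $[\tau_1 t,\tau_2 t]$; if $G_j(x^k+td^k)\le G_j(x^k)+t\nabla G_j(x^k)^\top d^k+t\frac{\gamma}{2}\|d^k\|^2$ for all $j=1,\ldots,m$, set $t_k=t$ and go to Step 4; otherwise repeat Step 3.3. Step 4: $x^{k+1}:=x^k+t_kd^k$, $k\leftarrow k+1$, go to Step 1. *)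

theory Defs
  imports "HOL-Analysis.Analysis"
begin

text \<open>Objectives are indexed by j in {..<m}. Each H j is represented by its effective
domain domH j and its (real) values on it; H j = +infinity outside domH j.\<close>

definition domF :: "nat \<Rightarrow> (nat \<Rightarrow> 'a set) \<Rightarrow> 'a set" where
  "domF m domH = (\<Inter>j\<in>{..<m}. domH j)"

text \<open>F y \<preceq> F x (for x in dom F): y must lie in dom F (else some F j y = +infinity).\<close>
definition Fle :: "nat \<Rightarrow> (nat \<Rightarrow> 'a \<Rightarrow> real) \<Rightarrow> (nat \<Rightarrow> 'a \<Rightarrow> real) \<Rightarrow> (nat \<Rightarrow> 'a set)
    \<Rightarrow> 'a \<Rightarrow> 'a \<Rightarrow> bool" where
  "Fle m G H domH y x \<longleftrightarrow> y \<in> domF m domH \<and> (\<forall>j<m. G j y + H j y \<le> G j x + H j x)"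

definition psi :: "nat \<Rightarrow> (nat \<Rightarrow> 'a \<Rightarrow> 'a::real_inner) \<Rightarrow> (nat \<Rightarrow> 'a \<Rightarrow> real) \<Rightarrow> 'a \<Rightarrow> 'a \<Rightarrow> real" where
  "psi m gG H x u = Max ((\<lambda>j. gG j x \<bullet> (u - x) + H j u - H j x) ` {..<m})"

text \<open>The unique minimizer of psi_x(u) + |u-x|^2/(2 alpha); outside dom F the objective is +infinity.\<close>
definition p_alpha :: "nat \<Rightarrow> (nat \<Rightarrow> 'a \<Rightarrow> 'a::real_inner) \<Rightarrow> (nat \<Rightarrow> 'a \<Rightarrow> real) \<Rightarrow> (nat \<Rightarrow> 'a set)
    \<Rightarrow> real \<Rightarrow> 'a \<Rightarrow> 'a" where
  "p_alpha m gG H domH \<alpha> x = (THE u. u \<in> domF m domH \<and>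
     (\<forall>v\<in>domF m domH. psi m gG H x u + (norm (u - x))\<^sup>2 / (2 * \<alpha>)
                        \<le> psi m gG H x v + (norm (v - x))\<^sup>2 / (2 * \<alpha>)))"

definition theta_alpha :: "nat \<Rightarrow> (nat \<Rightarrow> 'a \<Rightarrow> 'a::real_inner) \<Rightarrow> (nat \<Rightarrow> 'a \<Rightarrow> real) \<Rightarrow> (nat \<Rightarrow> 'a set)
    \<Rightarrow> real \<Rightarrow> 'a \<Rightarrow> real" where
  "theta_alpha m gG H domH \<alpha> x =
     (let p = p_alpha m gG H domH \<alpha> x in psi m gG H x p + (norm (p - x))\<^sup>2 / (2 * \<alpha>))"

definition armijo :: "(nat \<Rightarrow> 'a \<Rightarrow> real) \<Rightarrow> (nat \<Rightarrow> 'a \<Rightarrow> 'a::real_inner) \<Rightarrow> real \<Rightarrow> 'a \<Rightarrow> 'a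
    \<Rightarrow> nat \<Rightarrow> real \<Rightarrow> bool" where
  "armijo G gG \<gamma> x d j t \<longleftrightarrow>
     G j (x + t *\<^sub>R d) \<le> G j x + t * (gG j x \<bullet> d) + t * (\<gamma> / 2) * (norm d)\<^sup>2"

text \<open>One iteration (Steps 3 and 4) of MPG from x (with theta x \<noteq> 0) producing x'.
  s is the sequence of trial step sizes: s 0 = 1 and each replacement picks a value in
  [tau1 t, tau2 t]. i1 is the first index accepted in Step 3.1; if Step 3.2 fails, Step 3.3
  continues with i1+1, i1+2, ... until the first index i2 accepted for all j.\<close>
definition mpg_step :: "nat \<Rightarrow> (nat \<Rightarrow> 'a \<Rightarrow> real) \<Rightarrow> (nat \<Rightarrow> 'a \<Rightarrow> 'a::real_inner) \<Rightarrow> (nat \<Rightarrow> 'a \<Rightarrow> real)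
    \<Rightarrow> (nat \<Rightarrow> 'a set) \<Rightarrow> real \<Rightarrow> real \<Rightarrow> real \<Rightarrow> real \<Rightarrow> 'a \<Rightarrow> 'a \<Rightarrow> bool" where
  "mpg_step m G gG H domH \<alpha> \<gamma> \<tau>1 \<tau>2 x x' \<longleftrightarrow>
     (let d = p_alpha m gG H domH \<alpha> x - x in
      \<exists>j<m. (\<forall>i<m. gG i x \<bullet> d \<le> gG j x \<bullet> d) \<and>
        (\<exists>s :: nat \<Rightarrow> real. s 0 = 1 \<and> (\<forall>i. \<tau>1 * s i \<le> s (Suc i) \<and> s (Suc i) \<le> \<tau>2 * s i) \<and>
          (\<exists>i1. armijo G gG \<gamma> x d j (s i1) \<and> (\<forall>i<i1. \<not> armijo G gG \<gamma> x d j (s i)) \<and>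
             ((Fle m G H domH (x + s i1 *\<^sub>R d) x \<and> x' = x + s i1 *\<^sub>R d) \<or>
              (\<not> Fle m G H domH (x + s i1 *\<^sub>R d) x \<and>
               (\<exists>i2>i1. (\<forall>l<m. armijo G gG \<gamma> x d l (s i2)) \<and>
                  (\<forall>i. i1 < i \<and> i < i2 \<longrightarrow> \<not> (\<forall>l<m. armijo G gG \<gamma> x d l (s i))) \<and>
                  x' = x + s i2 *\<^sub>R d))))))"

text \<open>A run of MPG: the algorithm stops at k when theta(x k) = 0; iterates after a stop
  are unconstrained (they are not generated by the algorithm).\<close>
definition mpg_run :: "nat \<Rightarrow> (nat \<Rightarrow> 'a \<Rightarrow> real) \<Rightarrow> (nat \<Rightarrow> 'a \<Rightarrow> 'a::real_inner) \<Rightarrow> (nat \<Rightarrow> 'a \<Rightarrow> real)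
    \<Rightarrow> (nat \<Rightarrow> 'a set) \<Rightarrow> real \<Rightarrow> real \<Rightarrow> real \<Rightarrow> real \<Rightarrow> (nat \<Rightarrow> 'a) \<Rightarrow> bool" where
  "mpg_run m G gG H domH \<alpha> \<gamma> \<tau>1 \<tau>2 x \<longleftrightarrow>
     x 0 \<in> domF m domH \<and>
     (\<forall>k. theta_alpha m gG H domH \<alpha> (x k) \<noteq> 0 \<longrightarrow>
          mpg_step m G gG H domH \<alpha> \<gamma> \<tau>1 \<tau>2 (x k) (x (Suc k)))"

end

theory Submission
  imports Defs
begin


lemma cont_Max_fin:
  assumes "finite A" "A \<noteq> {}" "\<And>j. j \<in> A \<Longrightarrow> continuous_on S (f j)"
  shows "continuous_on S (\<lambda>u. Max ((\<lambda>j. f j u :: real) ` A))"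
  using assms
proof (induction A rule: finite_ne_induct)
  case (singleton x)
  then show ?case by simp
next
  case (insert x F)
  have "continuous_on S (\<lambda>u. max (f x u) (Max ((\<lambda>j. f j u) ` F)))"
    using insert by (intro continuous_on_max) auto
  moreover have "\<And>u. Max ((\<lambda>j. f j u) ` insert x F) = max (f x u) (Max ((\<lambda>j. f j u) ` F))"
    using insert by (simp add: Max_insert)
  ultimately show ?case by simp
qed

lemma par: "(norm ((1/2::real) *\<^sub>R (a + b)))\<^sup>2 = ((norm a)\<^sup>2 + (norm (b::'a::real_inner))\<^sup>2) / 2 - (norm (a - b))\<^sup>2 / 4"
  unfolding power2_norm_eq_inner
  by (simp add: inner_add_left inner_add_right inner_diff_left inner_diff_right inner_commute algebra_simps) (simp add: field_simps)

locale mpgl =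
  fixes m :: nat and G H :: "nat \<Rightarrow> 'a::euclidean_space \<Rightarrow> real" and gG :: "nat \<Rightarrow> 'a \<Rightarrow> 'a"
    and domH :: "nat \<Rightarrow> 'a set" and \<alpha> :: real
  assumes m_pos: "m > 0"
    and H_convex: "\<forall>j<m. convex (domH j) \<and> convex_on (domH j) (H j)"
    and H_cont: "\<forall>j<m. continuous_on (domH j) (H j)"
    and domF_closed: "closed (domF m domH)"
    and alpha: "\<alpha> > 0"
begin

abbreviation "D \<equiv> domF m domH"
abbreviation "ps \<equiv> psi m gG H"

lemma D_convex: "convex D"
  unfolding domF_def using H_convex by (intro convex_INT) auto

lemma D_sub: "j < m \<Longrightarrow> D \<subseteq> domH j"
  unfolding domF_def by auto

lemma psi_self: "ps x x = 0"
proof -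
  have "(\<lambda>j. gG j x \<bullet> (x - x) + H j x - H j x) ` {..<m} = {0}"
    using m_pos by auto
  then show ?thesis unfolding psi_def by simp
qed

lemma psi_ge: "j < m \<Longrightarrow> gG j x \<bullet> (u - x) + H j u - H j x \<le> ps x u"
  unfolding psi_def by (intro Max_ge) auto

lemma psi_le_iff: "ps x u \<le> c \<longleftrightarrow> (\<forall>j<m. gG j x \<bullet> (u - x) + H j u - H j x \<le> c)"
  unfolding psi_def using m_pos by (subst Max_le_iff) auto

lemma psi_convex:
  assumes "u \<in> D" "v \<in> D" "0 \<le> s" "s \<le> 1"
  shows "ps x ((1 - s) *\<^sub>R u + s *\<^sub>R v) \<le> (1 - s) * ps x u + s * ps x v"
  unfolding psi_le_iff
proof (intro allI impI)
  fix j assume j: "j < m"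
  have uv: "u \<in> domH j" "v \<in> domH j" using D_sub[OF j] assms by auto
  have H: "H j ((1 - s) *\<^sub>R u + s *\<^sub>R v) \<le> (1 - s) * H j u + s * H j v"
    using H_convex j uv assms by (intro convex_onD) auto
  have lin: "gG j x \<bullet> ((1 - s) *\<^sub>R u + s *\<^sub>R v - x) = (1 - s) * (gG j x \<bullet> (u - x)) + s * (gG j x \<bullet> (v - x))"
    by (simp add: algebra_simps inner_diff_right inner_add_right)
  have a: "(1 - s) * (gG j x \<bullet> (u - x) + H j u - H j x) \<le> (1 - s) * ps x u"
    using psi_ge[OF j] assms by (intro mult_left_mono) auto
  have b: "s * (gG j x \<bullet> (v - x) + H j v - H j x) \<le> s * ps x v"
    using psi_ge[OF j] assms by (intro mult_left_mono) auto
  show "gG j x \<bullet> ((1 - s) *\<^sub>R u + s *\<^sub>R v - x) + H j ((1 - s) *\<^sub>R u + s *\<^sub>R v) - H j x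
        \<le> (1 - s) * ps x u + s * ps x v"
    using H lin a b by (simp add: algebra_simps)
qed

lemma psi_cont: "continuous_on D (ps x)"
  unfolding psi_def
proof (rule cont_Max_fin)
  fix j assume "j \<in> {..<m}"
  then have "continuous_on D (H j)" using H_cont D_sub by (meson continuous_on_subset lessThan_iff)
  then show "continuous_on D (\<lambda>u. gG j x \<bullet> (u - x) + H j u - H j x)"
    by (intro continuous_intros)
qed (use m_pos in auto)


definition "phi x u = ps x u + (norm (u - x))\<^sup>2 / (2 * \<alpha>)"

lemma phi_self: "phi x x = 0" unfolding phi_def psi_self by simp

lemma psi_lower:
  assumes x: "x \<in> D"
  shows "\<exists>M\<ge>0. \<forall>u\<in>D. ps x u \<ge> - M * (1 + norm (u - x))"
proof -
  define K where "K = D \<inter> cball x 1"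
  have "compact K" unfolding K_def using domF_closed by (intro closed_Int_compact) auto
  moreover have "x \<in> K" using x unfolding K_def by auto
  moreover have "continuous_on K (ps x)" using psi_cont K_def continuous_on_subset by blast
  ultimately obtain w0 where w0: "w0 \<in> K" "\<And>y. y \<in> K \<Longrightarrow> ps x w0 \<le> ps x y"
    using continuous_attains_inf[of K "ps x"] by blast
  define M where "M = - ps x w0"
  have M0: "M \<ge> 0" using w0(2)[OF \<open>x \<in> K\<close>] psi_self M_def by simp
  have "ps x u \<ge> - M * (1 + norm (u - x))" if u: "u \<in> D" for u
  proof (cases "norm (u - x) \<le> 1")
    case True
    then have "u \<in> K" using u unfolding K_def by (simp add: dist_norm norm_minus_commute)
    then have "ps x u \<ge> -M" using w0 M_def by force
    moreover have "-M \<ge> - M * (1 + norm (u - x))" using M0 mult_left_mono[of 1 "1 + norm (u - x)" M] by simp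
    ultimately show ?thesis by linarith
  next
    case False
    define r where "r = norm (u - x)"
    have r1: "r > 1" using False r_def by simp
    define l where "l = 1 / r"
    have l: "0 \<le> l" "l \<le> 1" using r1 l_def by auto
    define w where "w = (1 - l) *\<^sub>R x + l *\<^sub>R u"
    have wD: "w \<in> D" unfolding w_def using D_convex x u l by (simp add: convexD_alt)
    have "w - x = l *\<^sub>R (u - x)" unfolding w_def by (simp add: algebra_simps)
    moreover have "u \<noteq> x" using r1 r_def by auto
    ultimately have "norm (w - x) = 1" using r1 l_def r_def by simp
    then have "w \<in> K" using wD unfolding K_def by (simp add: dist_norm norm_minus_commute)
    then have "-M \<le> ps x w" using w0 M_def by force
    also have "ps x w \<le> (1 - l) * ps x x + l * ps x u"
      unfolding w_def using psi_convex x u l by blast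
    also have "\<dots> = l * ps x u" using psi_self by simp
    finally have "-M \<le> ps x u / r" using l_def by simp
    then have "-M * r \<le> ps x u" using r1 by (simp add: field_simps)
    moreover have "- M * (1 + r) \<le> -M * r" using M0 by (simp add: algebra_simps)
    ultimately have "-M * (1 + r) \<le> ps x u" by linarith
    then show ?thesis by (simp add: r_def)
  qed
  then show ?thesis using M0 by blast
qed

lemma exists_min:
  assumes x: "x \<in> D"
  shows "\<exists>p\<in>D. \<forall>v\<in>D. phi x p \<le> phi x v"
proof -
  obtain M where M0: "M \<ge> 0" and M: "\<And>u. u \<in> D \<Longrightarrow> ps x u \<ge> - M * (1 + norm (u - x))"
    using psi_lower[OF x] by blast
  define R where "R = 2 * \<alpha> * (M + 1) + M + 1"
  define K where "K = D \<inter> cball x R"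
  have "compact K" unfolding K_def using domF_closed by (intro closed_Int_compact) auto
  moreover have xK: "x \<in> K" using x alpha M0 unfolding K_def R_def by auto
  moreover have "continuous_on K (phi x)"
  proof -
    have "continuous_on K (ps x)" using psi_cont K_def continuous_on_subset by blast
    then show ?thesis unfolding phi_def using alpha by (intro continuous_intros) auto
  qed
  ultimately obtain p where p: "p \<in> K" "\<And>y. y \<in> K \<Longrightarrow> phi x p \<le> phi x y"
    using continuous_attains_inf[of K "phi x"] by blast
  have "phi x p \<le> phi x v" if v: "v \<in> D" for v
  proof (cases "v \<in> K")
    case True then show ?thesis using p by blast
  next
    case False
    define r where "r = norm (v - x)"
    have rR: "r > R" using False v unfolding K_def r_def by (simp add: dist_norm norm_minus_commute)
    have "2 * \<alpha> * (M + 1) < r" using rR M0 unfolding R_def by linarith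
    then have "r / (2 * \<alpha>) > M + 1" using alpha by (simp add: field_simps)
    moreover have r0: "r > 0" using rR M0 alpha unfolding R_def
      by (smt (verit) mult_nonneg_nonneg)
    ultimately have "r * (r / (2 * \<alpha>)) > r * (M + 1)" by (intro mult_strict_left_mono)
    moreover have "r > M" using rR M0 alpha unfolding R_def by (smt (verit) mult_nonneg_nonneg)
    ultimately have "r\<^sup>2 / (2 * \<alpha>) > M * (1 + r)" by (simp add: power2_eq_square algebra_simps)
    then have "phi x v > 0" using M[OF v] unfolding phi_def r_def by linarith
    moreover have "phi x p \<le> 0" using p(2)[OF xK] phi_self by simp
    ultimately show ?thesis by linarith
  qed
  moreover have "p \<in> D" using p K_def by auto
  ultimately show ?thesis by blast
qed

lemma min_unique:
  assumes p: "p \<in> D" "\<forall>v\<in>D. phi x p \<le> phi x v" and q: "q \<in> D" "\<forall>v\<in>D. phi x q \<le> phi x v"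
  shows "p = q"
proof -
  define w where "w = (1 - 1/2) *\<^sub>R p + (1/2::real) *\<^sub>R q"
  have wD: "w \<in> D" unfolding w_def by (rule convexD_alt[OF D_convex p(1) q(1)]) auto
  have eq: "phi x p = phi x q" using p q by force
  have ps: "ps x w \<le> (1 - 1/2) * ps x p + (1/2) * ps x q"
    using psi_convex[OF p(1) q(1), of "1/2" x] unfolding w_def by simp
  have nrm: "(norm (w - x))\<^sup>2 = ((norm (p - x))\<^sup>2 + (norm (q - x))\<^sup>2) / 2 - (norm (p - q))\<^sup>2 / 4"
  proof -
    have hh: "(1 / 2::real) *\<^sub>R x + (1 / 2) *\<^sub>R x = x"
      by (metis scaleR_add_left field_sum_of_halves scaleR_one)
    have "w - x = (1/2) *\<^sub>R ((p - x) + (q - x))" unfolding w_def using hh by (simp add: algebra_simps)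
    moreover have "p - q = (p - x) - (q - x)" by simp
    ultimately show ?thesis using par[of "p - x" "q - x"] by simp
  qed
  have "phi x w = ps x w + (norm (w - x))\<^sup>2 / (2 * \<alpha>)" unfolding phi_def ..
  also have "\<dots> \<le> (phi x p + phi x q) / 2 - (norm (p - q))\<^sup>2 / (8 * \<alpha>)"
  proof -
    have "(norm (w - x))\<^sup>2 / (2 * \<alpha>) = ((norm (p - x))\<^sup>2 / (2 * \<alpha>) + (norm (q - x))\<^sup>2 / (2 * \<alpha>)) / 2
       - (norm (p - q))\<^sup>2 / (8 * \<alpha>)"
      unfolding nrm using alpha by (simp add: field_simps)
    moreover have "ps x w \<le> ps x p / 2 + ps x q / 2" using ps by simp
    ultimately show ?thesis unfolding phi_def by (simp add: field_simps)
  qed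
  finally have "phi x w \<le> phi x p - (norm (p - q))\<^sup>2 / (8 * \<alpha>)" using eq by simp
  moreover have "phi x p \<le> phi x w" using p wD by blast
  ultimately have "(norm (p - q))\<^sup>2 / (8 * \<alpha>) \<le> 0" by linarith
  then have "(norm (p - q))\<^sup>2 \<le> 0" using alpha by (simp add: divide_le_0_iff)
  then show ?thesis by simp
qed

abbreviation "pa \<equiv> p_alpha m gG H domH \<alpha>"

lemma pa_props:
  assumes x: "x \<in> D"
  shows "pa x \<in> D" "\<And>v. v \<in> D \<Longrightarrow> phi x (pa x) \<le> phi x v"
proof -
  have ex: "\<exists>!u. u \<in> D \<and> (\<forall>v\<in>D. phi x u \<le> phi x v)"
    using exists_min[OF x] min_unique by blast
  have "pa x \<in> D \<and> (\<forall>v\<in>D. phi x (pa x) \<le> phi x v)"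
    unfolding p_alpha_def using theI'[OF ex[unfolded phi_def]] unfolding phi_def by simp
  then show "pa x \<in> D" "\<And>v. v \<in> D \<Longrightarrow> phi x (pa x) \<le> phi x v" by auto
qed

lemma theta_eq: "theta_alpha m gG H domH \<alpha> x = phi x (pa x)"
  unfolding theta_alpha_def phi_def Let_def ..

end

context mpgl begin
abbreviation "th \<equiv> theta_alpha m gG H domH \<alpha>"

lemma theta_le0: "x \<in> D \<Longrightarrow> th x \<le> 0"
  using pa_props(2)[of x x] phi_self theta_eq by simp

lemma psi_p_bound:
  assumes x: "x \<in> D"
  shows "ps x (pa x) \<le> - (norm (pa x - x))\<^sup>2 / \<alpha>"
proof -
  define p where "p = pa x"
  define N where "N = (norm (p - x))\<^sup>2"
  have pD: "p \<in> D" using pa_props(1)[OF x] p_def by simp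
  have N0: "N \<ge> 0" unfolding N_def by simp
  have key: "ps x p \<le> (s - 2) * N / (2 * \<alpha>)" if s: "0 < s" "s \<le> 1" for s
  proof -
    define u where "u = (1 - s) *\<^sub>R p + s *\<^sub>R x"
    have uD: "u \<in> D" unfolding u_def using convexD_alt[OF D_convex pD x] s by simp
    have "phi x p \<le> phi x u" using pa_props(2)[OF x uD] p_def by simp
    moreover have "ps x u \<le> (1 - s) * ps x p + s * ps x x"
      unfolding u_def using psi_convex[OF pD x] s by simp
    moreover have "u - x = (1 - s) *\<^sub>R (p - x)" unfolding u_def by (simp add: algebra_simps)
    then have "(norm (u - x))\<^sup>2 = (1 - s)\<^sup>2 * N"
      unfolding N_def using s by (simp add: power_mult_distrib)
    ultimately have "ps x p + N / (2 * \<alpha>) \<le> (1 - s) * ps x p + (1 - s)\<^sup>2 * N / (2 * \<alpha>)"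
      unfolding phi_def N_def psi_self by simp
    then have "s * ps x p \<le> ((1 - s)\<^sup>2 - 1) * N / (2 * \<alpha>)"
      by (simp add: algebra_simps diff_divide_distrib)
    also have "((1 - s)\<^sup>2 - 1) * N / (2 * \<alpha>) = s * ((s - 2) * N / (2 * \<alpha>))"
      by (simp add: power2_eq_square algebra_simps)
    finally have "s * ps x p \<le> s * ((s - 2) * N / (2 * \<alpha>))" .
    then show ?thesis by (rule mult_le_cancel_left_pos[THEN iffD1, OF s(1)])
  qed
  have eps: "ps x p \<le> - N / \<alpha> + e" if e: "e > 0" for e
  proof -
    define s where "s = min 1 (e * (2 * \<alpha>) / (N + 1))"
    have s: "0 < s" "s \<le> 1" using e alpha N0 unfolding s_def by auto
    have "s * N \<le> e * (2 * \<alpha>) / (N + 1) * N"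
      using N0 unfolding s_def by (intro mult_right_mono) auto
    also have "\<dots> \<le> e * (2 * \<alpha>)"
    proof -
      have "N / (N + 1) \<le> 1" using N0 by simp
      then have "e * (2 * \<alpha>) * (N / (N + 1)) \<le> e * (2 * \<alpha>) * 1"
        using e alpha by (intro mult_left_mono) auto
      then show ?thesis by simp
    qed
    finally have "s * N / (2 * \<alpha>) \<le> e" using alpha by (simp add: pos_divide_le_eq)
    moreover have "(s - 2) * N / (2 * \<alpha>) = s * N / (2 * \<alpha>) - N / \<alpha>"
      using alpha by (simp add: diff_divide_distrib left_diff_distrib)
    ultimately show ?thesis using key[OF s] by linarith
  qed
  have "ps x p \<le> - N / \<alpha>" by (rule field_le_epsilon[OF eps])
  then show ?thesis unfolding p_def N_def by simp
qed

lemma decr_bound: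
  assumes x: "x \<in> D" and g: "0 < \<gamma>" "\<gamma> < 2 / \<alpha>"
  shows "ps x (pa x) + \<gamma> / 2 * (norm (pa x - x))\<^sup>2 \<le> (1 - \<gamma> * \<alpha> / 2) * th x"
proof -
  define P where "P = ps x (pa x)"
  define N where "N = (norm (pa x - x))\<^sup>2"
  have P: "P \<le> - N / \<alpha>" using psi_p_bound[OF x] P_def N_def by simp
  have thx: "th x = P + N / (2 * \<alpha>)" unfolding theta_eq phi_def P_def N_def ..
  have ga: "\<gamma> * \<alpha> < 2" using g alpha by (simp add: less_divide_eq)
  have N0: "N \<ge> 0" unfolding N_def by simp
  have "\<gamma> * \<alpha> / 2 * P \<le> \<gamma> * \<alpha> / 2 * (- N / \<alpha>)"
    using P g alpha by (intro mult_left_mono) auto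
  also have "\<dots> = - \<gamma> / 2 * N" using alpha by simp
  finally have a: "\<gamma> * \<alpha> / 2 * P \<le> - \<gamma> / 2 * N" .
  have b: "(1 - \<gamma> * \<alpha> / 2) * (N / (2 * \<alpha>)) \<ge> 0"
    using ga N0 alpha by (intro mult_nonneg_nonneg) auto
  have "(1 - \<gamma> * \<alpha> / 2) * (P + N / (2 * \<alpha>)) = P - \<gamma> * \<alpha> / 2 * P + (1 - \<gamma> * \<alpha> / 2) * (N / (2 * \<alpha>))"
    by (simp add: algebra_simps)
  then have "P + \<gamma> / 2 * N \<le> (1 - \<gamma> * \<alpha> / 2) * (P + N / (2 * \<alpha>))" using a b by linarith
  then show ?thesis unfolding thx P_def N_def .
qed

end


lemma descent:
  fixes g :: "'a::euclidean_space \<Rightarrow> real" and gg :: "'a \<Rightarrow> 'a"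
  assumes der: "\<forall>y. (g has_derivative (\<lambda>h. gg y \<bullet> h)) (at y)"
    and lip: "lipschitz_on L UNIV gg" and t: "0 < t" "t * L \<le> \<gamma> / 2"
  shows "g (x + t *\<^sub>R d) \<le> g x + t * (gg x \<bullet> d) + t * (\<gamma> / 2) * (norm d)\<^sup>2"
proof -
  define f where "f s = g (x + s *\<^sub>R d) - s * (gg x \<bullet> d)" for s
  define f' where "f' s h = gg (x + s *\<^sub>R d) \<bullet> (h *\<^sub>R d) - h * (gg x \<bullet> d)" for s h
  have "(f has_derivative f' s) (at s within {0..t})" for s
  proof -
    have l: "((\<lambda>s. x + s *\<^sub>R d) has_derivative (\<lambda>h. h *\<^sub>R d)) (at s within {0..t})"
      by (auto intro!: derivative_eq_intros)
    have "((\<lambda>s. g (x + s *\<^sub>R d)) has_derivative (\<lambda>h. gg (x + s *\<^sub>R d) \<bullet> (h *\<^sub>R d))) (at s within {0..t})"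
      using has_derivative_in_compose[OF l, of g "\<lambda>h. gg (x + s *\<^sub>R d) \<bullet> h"] der
      by (simp add: o_def has_derivative_at_withinI)
    then show ?thesis unfolding f_def f'_def
      by (auto intro!: derivative_eq_intros)
  qed
  then obtain z where z: "z \<in> {0<..<t}" "f t - f 0 = f' z (t - 0)"
    using mvt_simple[OF t(1), of f f'] by auto
  have "f' z t = t * ((gg (x + z *\<^sub>R d) - gg x) \<bullet> d)"
    unfolding f'_def by (simp add: algebra_simps inner_diff_left)
  also have "\<dots> \<le> t * (norm (gg (x + z *\<^sub>R d) - gg x) * norm d)"
    using t by (intro mult_left_mono norm_cauchy_schwarz) auto
  also have "\<dots> \<le> t * (L * norm (z *\<^sub>R d) * norm d)"
  proof -
    have "norm (gg (x + z *\<^sub>R d) - gg x) \<le> L * norm (z *\<^sub>R d)"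
      using lipschitz_onD[OF lip, of "x + z *\<^sub>R d" x] by (simp add: dist_norm)
    then show ?thesis using t by (intro mult_left_mono mult_right_mono) auto
  qed
  also have "\<dots> \<le> t * (L * t * (norm d)\<^sup>2)"
  proof -
    have L0: "L \<ge> 0" using lipschitz_on_nonneg[OF lip] by simp
    have "norm (z *\<^sub>R d) \<le> t * norm d" using z by (auto intro!: mult_right_mono)
    then have "L * norm (z *\<^sub>R d) * norm d \<le> L * (t * norm d) * norm d"
      using L0 by (intro mult_right_mono mult_left_mono) auto
    then show ?thesis using t by (intro mult_left_mono) (auto simp: power2_eq_square algebra_simps)
  qed
  also have "\<dots> = (t * L) * (t * (norm d)\<^sup>2)" by (simp add: algebra_simps)
  also have "\<dots> \<le> (\<gamma> / 2) * (t * (norm d)\<^sup>2)"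
    using t by (intro mult_right_mono) auto
  finally have "f t - f 0 \<le> t * (\<gamma> / 2) * (norm d)\<^sup>2" using z by (simp add: algebra_simps)
  then show ?thesis unfolding f_def by (simp add: algebra_simps)
qed


locale mpg2 = mpgl m G H gG domH \<alpha> for m G H gG domH \<alpha> +
  fixes \<gamma> \<tau>1 \<tau>2 :: real and L :: "nat \<Rightarrow> real"
  assumes G_diff: "\<forall>j<m. \<forall>y. (G j has_derivative (\<lambda>h. gG j y \<bullet> h)) (at y)"
    and Lip: "\<forall>j<m. L j > 0 \<and> lipschitz_on (L j) UNIV (gG j)"
    and gamma: "0 < \<gamma>" "\<gamma> < 2 / \<alpha>"
    and tau: "0 < \<tau>1" "\<tau>1 < \<tau>2" "\<tau>2 < 1"
begin

definition "Lmax = Max (L ` {..<m})"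
definition "tb = \<gamma> / (2 * Lmax)"
definition "tmin = \<tau>1 * min 1 (\<tau>1 * tb)"
definition "cc = 1 - \<gamma> * \<alpha> / 2"
definition "\<kappa> = cc * tmin"
definition "E y = (\<Sum>j<m. G j y + H j y)"

lemma L_le_Lmax: "j < m \<Longrightarrow> L j \<le> Lmax"
  unfolding Lmax_def by (intro Max_ge) auto

lemma Lmax_pos: "Lmax > 0"
  using L_le_Lmax[OF m_pos] Lip m_pos by force

lemma tb_pos: "tb > 0" unfolding tb_def using gamma Lmax_pos by simp

lemma tmin_pos: "tmin > 0" unfolding tmin_def using tau tb_pos by simp

lemma cc_pos: "cc > 0"
proof -
  have "\<gamma> * \<alpha> < 2" using gamma alpha by (simp add: less_divide_eq)
  then show ?thesis unfolding cc_def by simp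
qed

lemma kappa_pos: "\<kappa> > 0" unfolding \<kappa>_def using cc_pos tmin_pos by simp

lemma armijo_small:
  assumes j: "j < m" and t: "0 < t" "t \<le> tb"
  shows "armijo G gG \<gamma> x d j t"
proof -
  have "t * L j \<le> tb * Lmax"
    using t L_le_Lmax[OF j] Lip j by (intro mult_mono) auto
  also have "\<dots> = \<gamma> / 2" unfolding tb_def using Lmax_pos by simp
  finally have "t * L j \<le> \<gamma> / 2" .
  then show ?thesis unfolding armijo_def
    using descent[of "G j" "gG j" "L j" t \<gamma> x d] G_diff Lip j t by auto
qed

lemma F_decr:
  assumes x: "x \<in> D" and j: "j < m" and t: "0 < t" "t \<le> 1"
    and arm: "armijo G gG \<gamma> x (pa x - x) j t"
  shows "x + t *\<^sub>R (pa x - x) \<in> D"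
    and "G j (x + t *\<^sub>R (pa x - x)) + H j (x + t *\<^sub>R (pa x - x)) \<le> G j x + H j x + t * cc * th x"
proof -
  define p where "p = pa x"
  define d where "d = p - x"
  have pD: "p \<in> D" using pa_props(1)[OF x] p_def by simp
  have eq: "x + t *\<^sub>R d = (1 - t) *\<^sub>R x + t *\<^sub>R p" unfolding d_def by (simp add: algebra_simps)
  show "x + t *\<^sub>R (pa x - x) \<in> D"
    using eq convexD_alt[OF D_convex x pD, of t] t unfolding d_def p_def by simp
  have xj: "x \<in> domH j" "p \<in> domH j" using D_sub[OF j] x pD by auto
  have Hc: "H j (x + t *\<^sub>R d) \<le> (1 - t) * H j x + t * H j p"
    unfolding eq using H_convex j xj t by (intro convex_onD) auto
  have Gc: "G j (x + t *\<^sub>R d) \<le> G j x + t * (gG j x \<bullet> d) + t * (\<gamma> / 2) * (norm d)\<^sup>2"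
    using arm unfolding armijo_def d_def p_def .
  have "gG j x \<bullet> d + H j p - H j x \<le> ps x p" unfolding d_def using psi_ge[OF j] .
  then have "gG j x \<bullet> d + H j p - H j x + \<gamma> / 2 * (norm d)\<^sup>2 \<le> cc * th x"
    using decr_bound[OF x gamma] unfolding cc_def p_def d_def by linarith
  then have "t * (gG j x \<bullet> d + H j p - H j x + \<gamma> / 2 * (norm d)\<^sup>2) \<le> t * (cc * th x)"
    using t by (intro mult_left_mono) auto
  then show "G j (x + t *\<^sub>R (pa x - x)) + H j (x + t *\<^sub>R (pa x - x)) \<le> G j x + H j x + t * cc * th x"
    using Hc Gc unfolding d_def p_def by (simp add: algebra_simps)
qed

end

context mpg2 begin

lemma step_props:
  assumes x: "x \<in> D" and st: "mpg_step m G gG H domH \<alpha> \<gamma> \<tau>1 \<tau>2 x x'"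
  shows "Fle m G H domH x' x" "\<exists>j<m. G j x' + H j x' \<le> G j x + H j x - \<kappa> * \<bar>th x\<bar>"
proof -
  define d where "d = pa x - x"
  obtain js s i1 where js: "js < m" and s0: "s 0 = 1"
    and sstep: "\<And>i. \<tau>1 * s i \<le> s (Suc i) \<and> s (Suc i) \<le> \<tau>2 * s i"
    and a1: "armijo G gG \<gamma> x d js (s i1)" and a1n: "\<And>i. i < i1 \<Longrightarrow> \<not> armijo G gG \<gamma> x d js (s i)"
    and br: "(Fle m G H domH (x + s i1 *\<^sub>R d) x \<and> x' = x + s i1 *\<^sub>R d) \<or>
              (\<not> Fle m G H domH (x + s i1 *\<^sub>R d) x \<and>
               (\<exists>i2>i1. (\<forall>l<m. armijo G gG \<gamma> x d l (s i2)) \<and>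
                  (\<forall>i. i1 < i \<and> i < i2 \<longrightarrow> \<not> (\<forall>l<m. armijo G gG \<gamma> x d l (s i))) \<and>
                  x' = x + s i2 *\<^sub>R d))"
    using st unfolding mpg_step_def Let_def d_def by blast
  have spos: "s i > 0" for i
  proof (induction i)
    case 0 then show ?case using s0 by simp
  next
    case (Suc i) then show ?case using sstep[of i] tau by (smt (verit) mult_pos_pos)
  qed
  have sle1: "s i \<le> 1" for i
  proof (induction i)
    case 0 then show ?case using s0 by simp
  next
    case (Suc i)
    have "\<tau>2 * s i \<le> s i" using spos[of i] tau by (simp add: mult_le_cancel_right1)
    then show ?case using sstep[of i] Suc by linarith
  qed
  have big: "s i > tb" if "\<not> (\<forall>l<m. armijo G gG \<gamma> x d l (s i))" for i
    using that armijo_small spos by force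
  have mn: "min 1 (\<tau>1 * tb) \<le> \<tau>1 * tb" by simp
  have s1: "s i1 \<ge> min 1 (\<tau>1 * tb)"
  proof (cases i1)
    case 0 then show ?thesis using s0 by simp
  next
    case (Suc i)
    then have "\<not> armijo G gG \<gamma> x d js (s i)" using a1n by simp
    then have "s i > tb" using armijo_small[OF js spos[of i]] by force
    then have "\<tau>1 * tb \<le> \<tau>1 * s i" using tau by simp
    then show ?thesis using sstep[of i] mn unfolding Suc by linarith
  qed
  have tminle: "tmin \<le> min 1 (\<tau>1 * tb)"
  proof -
    have "0 \<le> min 1 (\<tau>1 * tb)" using tau tb_pos by simp
    then have "\<tau>1 * min 1 (\<tau>1 * tb) \<le> 1 * min 1 (\<tau>1 * tb)"
      using tau by (intro mult_right_mono) auto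
    then show ?thesis unfolding tmin_def by simp
  qed
  have cth: "cc * th x \<le> 0" using cc_pos theta_le0[OF x] by (simp add: mult_nonneg_nonpos)
  have kap: "t * cc * th x \<le> - \<kappa> * \<bar>th x\<bar>" if "t \<ge> tmin" for t
  proof -
    have "t * (cc * th x) \<le> tmin * (cc * th x)" using that cth by (intro mult_right_mono_neg) auto
    also have "\<dots> = - \<kappa> * \<bar>th x\<bar>" unfolding \<kappa>_def using theta_le0[OF x] by simp
    finally show ?thesis by simp
  qed
  have "Fle m G H domH x' x \<and> (\<exists>j<m. G j x' + H j x' \<le> G j x + H j x - \<kappa> * \<bar>th x\<bar>)"
    using br
  proof
    assume A: "Fle m G H domH (x + s i1 *\<^sub>R d) x \<and> x' = x + s i1 *\<^sub>R d"
    have "s i1 \<ge> tmin" using s1 tminle by linarith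
    then have "G js x' + H js x' \<le> G js x + H js x - \<kappa> * \<bar>th x\<bar>"
    proof -
      from F_decr(2)[OF x js spos[of i1] sle1[of i1] a1[unfolded d_def]]
      have "G js x' + H js x' \<le> G js x + H js x + s i1 * cc * th x" using A unfolding d_def by simp
      then show ?thesis using kap[of "s i1"] \<open>s i1 \<ge> tmin\<close> by linarith
    qed
    then show ?thesis using A js by blast
  next
    assume "\<not> Fle m G H domH (x + s i1 *\<^sub>R d) x \<and>
               (\<exists>i2>i1. (\<forall>l<m. armijo G gG \<gamma> x d l (s i2)) \<and>
                  (\<forall>i. i1 < i \<and> i < i2 \<longrightarrow> \<not> (\<forall>l<m. armijo G gG \<gamma> x d l (s i))) \<and>
                  x' = x + s i2 *\<^sub>R d)"
    then obtain i2 where i2: "i2 > i1" "\<forall>l<m. armijo G gG \<gamma> x d l (s i2)"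
      "\<forall>i. i1 < i \<and> i < i2 \<longrightarrow> \<not> (\<forall>l<m. armijo G gG \<gamma> x d l (s i))" "x' = x + s i2 *\<^sub>R d"
      by blast
    have st2: "s i2 \<ge> tmin"
    proof (cases "i2 = Suc i1")
      case True
      then have "s i2 \<ge> \<tau>1 * s i1" using sstep[of i1] by simp
      moreover have "\<tau>1 * s i1 \<ge> tmin" unfolding tmin_def using s1 tau by simp
      ultimately show ?thesis by linarith
    next
      case False
      then obtain i where i: "i2 = Suc i" "i1 < i" using i2(1) by (cases i2) auto
      then have "s i > tb" using big i2(3) by blast
      then have "s i2 \<ge> \<tau>1 * tb" using sstep[of i] i tau by (smt (verit) mult_left_mono)
      moreover have "\<tau>1 * tb \<ge> tmin" unfolding tmin_def using mn tau tb_pos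
        by (smt (verit) mult_left_mono mult_le_cancel_right1 mult_pos_pos)
      ultimately show ?thesis by linarith
    qed
    have dec: "G j x' + H j x' \<le> G j x + H j x - \<kappa> * \<bar>th x\<bar>" if j: "j < m" for j
    proof -
      have "armijo G gG \<gamma> x (pa x - x) j (s i2)" using i2(2) j unfolding d_def by blast
      from F_decr(2)[OF x j spos[of i2] sle1[of i2] this]
      have "G j x' + H j x' \<le> G j x + H j x + s i2 * cc * th x" unfolding i2(4) d_def .
      then show ?thesis using kap[OF st2] by linarith
    qed
    have "armijo G gG \<gamma> x (pa x - x) js (s i2)" using i2(2) js unfolding d_def by blast
    from F_decr(1)[OF x js spos[of i2] sle1[of i2] this]
    have x'D: "x' \<in> D" unfolding i2(4) d_def .
    have "\<kappa> * \<bar>th x\<bar> \<ge> 0" using kappa_pos by simp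
    then have "Fle m G H domH x' x" unfolding Fle_def using x'D dec by force
    then show ?thesis using dec m_pos by blast
  qed
  then show "Fle m G H domH x' x" "\<exists>j<m. G j x' + H j x' \<le> G j x + H j x - \<kappa> * \<bar>th x\<bar>" by auto
qed

lemma E_decr:
  assumes x: "x \<in> D" and st: "mpg_step m G gG H domH \<alpha> \<gamma> \<tau>1 \<tau>2 x x'"
  shows "E x' \<le> E x - \<kappa> * \<bar>th x\<bar>"
proof -
  obtain j0 where j0: "j0 < m" "G j0 x' + H j0 x' \<le> G j0 x + H j0 x - \<kappa> * \<bar>th x\<bar>"
    using step_props(2)[OF x st] by blast
  have fl: "\<forall>j<m. G j x' + H j x' \<le> G j x + H j x" using step_props(1)[OF x st] unfolding Fle_def by blast
  have "E x' \<le> (\<Sum>j<m. G j x + H j x - (if j = j0 then \<kappa> * \<bar>th x\<bar> else 0))"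
    unfolding E_def using fl j0 by (intro sum_mono) auto
  also have "\<dots> = E x - \<kappa> * \<bar>th x\<bar>"
    unfolding E_def using j0 by (simp add: sum_subtractf)
  finally show ?thesis .
qed

end

context mpg2 begin

lemma main_loc:
  fixes x :: "nat \<Rightarrow> 'a"
  assumes A1: "\<forall>y :: nat \<Rightarrow> 'a. (\<forall>k. y k \<in> D) \<and>
               (\<forall>k. Fle m G H domH (y (Suc k)) (y k)) \<longrightarrow>
               (\<exists>z\<in>D. \<forall>k. Fle m G H domH z (y k))"
    and run: "mpg_run m G gG H domH \<alpha> \<gamma> \<tau>1 \<tau>2 x"
  shows "\<exists>C>0. \<forall>\<epsilon>>0. \<exists>k. real k \<le> C / \<epsilon> \<and> \<bar>th (x k)\<bar> \<le> \<epsilon>"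
proof -
  have x0: "x 0 \<in> D" and stp: "\<And>k. th (x k) \<noteq> 0 \<Longrightarrow> mpg_step m G gG H domH \<alpha> \<gamma> \<tau>1 \<tau>2 (x k) (x (Suc k))"
    using run unfolding mpg_run_def by auto
  have inD: "x n \<in> D" if "\<forall>k<n. th (x k) \<noteq> 0" for n
    using that
  proof (induction n)
    case 0 then show ?case using x0 by simp
  next
    case (Suc n)
    then have "x n \<in> D" "th (x n) \<noteq> 0" by auto
    then show ?case using step_props(1)[OF _ stp] unfolding Fle_def by blast
  qed
  have flek: "Fle m G H domH (x (Suc k)) (x k) \<and> E (x (Suc k)) \<le> E (x k) - \<kappa> * \<bar>th (x k)\<bar>"
    if "\<forall>i<Suc k. th (x i) \<noteq> 0" for k
  proof -
    have xk: "x k \<in> D" using inD that by auto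
    have "th (x k) \<noteq> 0" using that by auto
    then have st: "mpg_step m G gG H domH \<alpha> \<gamma> \<tau>1 \<tau>2 (x k) (x (Suc k))" by (rule stp)
    show ?thesis using step_props(1)[OF xk st] E_decr[OF xk st] by simp
  qed
  have refl: "Fle m G H domH a a" if "a \<in> D" for a unfolding Fle_def using that by simp
  obtain z where zD: "z \<in> D" and zle: "\<And>n. \<forall>k<n. th (x k) \<noteq> 0 \<Longrightarrow> Fle m G H domH z (x n)"
  proof (cases "\<exists>k. th (x k) = 0")
    case True
    define k0 where "k0 = (LEAST k. th (x k) = 0)"
    have k0: "th (x k0) = 0" using LeastI_ex[OF True] unfolding k0_def .
    have bef: "th (x i) \<noteq> 0" if "i < k0" for i
      using not_less_Least[of i "\<lambda>k. th (x k) = 0"] that unfolding k0_def by simp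
    define y where "y k = x (min k k0)" for k
    have yD: "\<forall>k. y k \<in> D"
    proof
      fix k
      have "\<forall>i<min k k0. th (x i) \<noteq> 0" using bef by simp
      then show "y k \<in> D" unfolding y_def by (rule inD)
    qed
    have "Fle m G H domH (y (Suc k)) (y k)" for k
    proof (cases "k < k0")
      case True
      then have "y (Suc k) = x (Suc k)" "y k = x k" unfolding y_def by auto
      then show ?thesis using flek[of k] bef True by simp
    next
      case False
      then have "y (Suc k) = y k" unfolding y_def by simp
      then show ?thesis using refl yD by simp
    qed
    then obtain z where z: "z \<in> D" "\<forall>k. Fle m G H domH z (y k)" using A1 yD by blast
    show ?thesis
    proof (rule that[OF z(1)])
      fix n assume n: "\<forall>k<n. th (x k) \<noteq> 0"
      have "n \<le> k0"
      proof (rule ccontr)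
        assume "\<not> n \<le> k0"
        then have "k0 < n" by simp
        then show False using n k0 by blast
      qed
      then have "y n = x n" unfolding y_def by simp
      then show "Fle m G H domH z (x n)" using z(2) by metis
    qed
  next
    case False
    then have "\<forall>k. x k \<in> D" "\<forall>k. Fle m G H domH (x (Suc k)) (x k)"
      using inD flek by auto
    then obtain z where z: "z \<in> D" "\<forall>k. Fle m G H domH z (x k)" using A1 by blast
    show ?thesis using that[OF z(1)] z(2) by blast
  qed
  have Ez: "E z \<le> E (x n)" if "\<forall>k<n. th (x k) \<noteq> 0" for n
    using zle[OF that] unfolding Fle_def E_def by (intro sum_mono) auto
  define B where "B = E (x 0) - E z"
  have B0: "B \<ge> 0" using Ez[of 0] B_def by simp
  define C where "C = B / \<kappa> + 1"
  have "B / \<kappa> \<ge> 0" using B0 kappa_pos by simp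
  then have Cpos: "C > 0" unfolding C_def by linarith
  have "\<exists>k. real k \<le> C / \<epsilon> \<and> \<bar>th (x k)\<bar> \<le> \<epsilon>" if e: "\<epsilon> > 0" for \<epsilon>
  proof (rule ccontr)
    assume neg: "\<not> ?thesis"
    define N where "N = nat \<lfloor>C / \<epsilon>\<rfloor>"
    have Ce: "C / \<epsilon> > 0" using Cpos e by simp
    have NC: "real N \<le> C / \<epsilon>" unfolding N_def using Ce by linarith
    have NC2: "real N + 1 > C / \<epsilon>" unfolding N_def using Ce by linarith
    have big: "\<bar>th (x k)\<bar> > \<epsilon>" if "k \<le> N" for k
    proof -
      have "real k \<le> real N" using that by simp
      then have "real k \<le> C / \<epsilon>" using NC by linarith
      then show ?thesis using neg by force
    qed
    have dec: "n \<le> Suc N \<Longrightarrow> E (x n) \<le> E (x 0) - \<kappa> * real n * \<epsilon>" for n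
    proof (induction n)
      case 0 then show ?case by simp
    next
      case (Suc n)
      have "\<forall>i<Suc n. th (x i) \<noteq> 0"
      proof (intro allI impI)
        fix i assume "i < Suc n"
        then have "i \<le> N" using Suc.prems by simp
        then show "th (x i) \<noteq> 0" using big[of i] e by auto
      qed
      then have "E (x (Suc n)) \<le> E (x n) - \<kappa> * \<bar>th (x n)\<bar>" using flek by blast
      moreover have "\<kappa> * \<epsilon> \<le> \<kappa> * \<bar>th (x n)\<bar>"
        using big[of n] Suc.prems kappa_pos by simp
      ultimately show ?case using Suc by (simp add: algebra_simps)
    qed
    have "\<forall>k<Suc N. th (x k) \<noteq> 0"
    proof (intro allI impI)
      fix i assume "i < Suc N"
      then have "i \<le> N" by simp
      then show "th (x i) \<noteq> 0" using big[of i] e by auto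
    qed
    then have "E z \<le> E (x (Suc N))" by (rule Ez)
    then have "\<kappa> * (real N + 1) * \<epsilon> \<le> B" using dec[of "Suc N"] B_def by (simp add: add.commute)
    then have "(real N + 1) * \<epsilon> \<le> B / \<kappa>" using kappa_pos by (simp add: field_simps)
    moreover have "(real N + 1) * \<epsilon> > C" using NC2 e by (simp add: field_simps)
    ultimately show False unfolding C_def by simp
  qed
  then show ?thesis using Cpos by blast
qed

end

theorem mainTheorem7:
  fixes m :: nat
    and G H :: "nat \<Rightarrow> real ^ 'n \<Rightarrow> real"
    and gG :: "nat \<Rightarrow> real ^ 'n \<Rightarrow> real ^ 'n"
    and domH :: "nat \<Rightarrow> (real ^ 'n) set"
    and L :: "nat \<Rightarrow> real"
    and \<alpha> \<gamma> \<tau>1 \<tau>2 :: real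
    and x :: "nat \<Rightarrow> real ^ 'n"
  assumes m_pos: "m > 0"
    and G_diff: "\<forall>j<m. \<forall>y. (G j has_derivative (\<lambda>h. gG j y \<bullet> h)) (at y)"
    and G_C1: "\<forall>j<m. continuous_on UNIV (gG j)"
    and G_convex: "\<forall>j<m. convex_on UNIV (G j)"
    and H_proper: "\<forall>j<m. domH j \<noteq> {}"
    and H_convex: "\<forall>j<m. convex (domH j) \<and> convex_on (domH j) (H j)"
    and H_cont: "\<forall>j<m. continuous_on (domH j) (H j)"
    and domF_ne: "domF m domH \<noteq> {}"
    and domF_closed: "closed (domF m domH)"
    and A1: "\<forall>y :: nat \<Rightarrow> real ^ 'n. (\<forall>k. y k \<in> domF m domH) \<and>
               (\<forall>k. Fle m G H domH (y (Suc k)) (y k)) \<longrightarrow>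
               (\<exists>z\<in>domF m domH. \<forall>k. Fle m G H domH z (y k))"
    and Lip: "\<forall>j<m. L j > 0 \<and> lipschitz_on (L j) UNIV (gG j)"
    and alpha: "\<alpha> > 0"
    and gamma: "0 < \<gamma>" "\<gamma> < 2 / \<alpha>"
    and tau: "0 < \<tau>1" "\<tau>1 < \<tau>2" "\<tau>2 < 1"
    and run: "mpg_run m G gG H domH \<alpha> \<gamma> \<tau>1 \<tau>2 x"
  shows "\<exists>C>0. \<forall>\<epsilon>>0. \<exists>k. real k \<le> C / \<epsilon> \<and>
           \<bar>theta_alpha m gG H domH \<alpha> (x k)\<bar> \<le> \<epsilon>"
proof -
  interpret mpg2 m G H gG domH \<alpha> \<gamma> \<tau>1 \<tau>2 L
    by unfold_locales (use assms in auto)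
  show ?thesis by (rule main_loc[OF A1 run])
qed

end
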